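(* Let $p$ be a prime, $A\cong C_p\times C_p$, $G$ an abelian group acting on $A$ and $H\le G$. If $f\in\mathcal{E}(G,H,A)$ and $a\in A$ satisfies $f(a)<0$, then $\mathrm{C}_G(a)=\mathrm{C}_G(A)$.
   Context: $\mathrm{C}_G(S)$ denotes the pointwise stabilizer of $S\subseteq A$ in $G$. Definition of $\mathcal{E}(G,H,A)$ (for a group $G$ acting on a finite abelian group $A$ and $H\le G$): the set of functions $f:A\to\mathbb{Z}$ constant on $H$-orbits such that (I) $\sum_{X\in\mathrm{Cl}_H(A)}f(X)=1$, where $\mathrm{Cl}_H(A)$ is the set of $H$-orbits; (II) $f$ vanishes outside a single local $G$-class of $A$ ($a,b$ locally $G$-conjugate iff $a_r,b_r$ are $G$-conjugate for every prime $r$, $a_r$ the $r$-part); (III) $\sum_{c\in C}|\mathrm{C}_H(c)|f(c)\ge0$ for every coset $C$ of a minimal cocyclic subgroup of $A$ (a subgroup $L$ with $A/L$ cyclic, minimal with this property); (IV) $f(a)\ge -h_A[\mathrm{C}_H(a_{\pi_0}):\mathrm{C}_H(a)]$ for all $a$, where $\pi_0$ is the set of primes $r$ dividing $|A|$ with $A_r$ cyclic and $h_A=\frac{\sum_{X\in\pi^-}\prod_{r\in\pi}(r^{k_r-\Delta_X(r)}-1)}{\prod_{r\in\pi}(r-1)r^{k_r-1}}$ with $\pi$ the primes dividing $|A|$, $\pi^-$ the odd-cardinality subsets of $\pi$, $\Delta_X$ the characteristic function of $X$, $k_r$ the rank of the socle of $A_r$; (V) $f(a)<0$ for some $a$. 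*)

theory Defs
  imports "HOL-Algebra.Algebra" "HOL-Computational_Algebra.Primes"
begin

definition cent :: "'g set \<Rightarrow> ('g \<Rightarrow> 'a \<Rightarrow> 'a) \<Rightarrow> 'a set \<Rightarrow> 'g set" where
  "cent K \<phi> S = {g \<in> K. \<forall>s\<in>S. \<phi> g s = s}"

text \<open>The r-part a_r is pi_part A {r} a.\<close>
definition pi_part :: "'a monoid \<Rightarrow> nat set \<Rightarrow> 'a \<Rightarrow> 'a" where
  "pi_part A S a = (THE b. b \<in> carrier A \<and> (\<exists>k::nat. b = a [^]\<^bsub>A\<^esub> k)
      \<and> (\<forall>q. Factorial_Ring.prime q \<and> q dvd group.ord A b \<longrightarrow> q \<in> S)
      \<and> (\<forall>q\<in>S. \<not> q dvd group.ord A (a \<otimes>\<^bsub>A\<^esub> inv\<^bsub>A\<^esub> b)))"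

definition loc_conj :: "'g monoid \<Rightarrow> ('g \<Rightarrow> 'a \<Rightarrow> 'a) \<Rightarrow> 'a monoid \<Rightarrow> 'a \<Rightarrow> 'a \<Rightarrow> bool" where
  "loc_conj G \<phi> A a b =
     (\<forall>r::nat. Factorial_Ring.prime r \<longrightarrow> (\<exists>g\<in>carrier G. \<phi> g (pi_part A {r} a) = pi_part A {r} b))"

definition orbits_set :: "'g set \<Rightarrow> ('g \<Rightarrow> 'a \<Rightarrow> 'a) \<Rightarrow> 'a monoid \<Rightarrow> 'a set set" where
  "orbits_set H \<phi> A = {{\<phi> h a | h. h \<in> H} | a. a \<in> carrier A}"

definition cocyclic :: "'a monoid \<Rightarrow> 'a set \<Rightarrow> bool" where
  "cocyclic A L = (subgroup L A \<and> cyclic_group (A Mod L))"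

definition min_cocyclic :: "'a monoid \<Rightarrow> 'a set \<Rightarrow> bool" where
  "min_cocyclic A L = (cocyclic A L \<and> (\<forall>L'. cocyclic A L' \<and> L' \<subseteq> L \<longrightarrow> L' = L))"

definition primes_of :: "'a monoid \<Rightarrow> nat set" where
  "primes_of A = {r. Factorial_Ring.prime r \<and> r dvd card (carrier A)}"

definition sylow_part :: "'a monoid \<Rightarrow> nat \<Rightarrow> 'a set" where
  "sylow_part A r = {x \<in> carrier A. \<exists>e::nat. group.ord A x = r ^ e}"

definition pi0 :: "'a monoid \<Rightarrow> nat set" where
  "pi0 A = {r \<in> primes_of A. cyclic_group (subgroup_generated A (sylow_part A r))}"

definition socle_rank :: "'a monoid \<Rightarrow> nat \<Rightarrow> nat" where
  "socle_rank A r = multiplicity r (card {x \<in> sylow_part A r. x [^]\<^bsub>A\<^esub> r = \<one>\<^bsub>A\<^esub>})"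

definition hA :: "'a monoid \<Rightarrow> real" where
  "hA A =
    sum (\<lambda>Q. prod (\<lambda>r. real r ^ (socle_rank A r - (if r \<in> Q then 1 else 0)) - 1) (primes_of A))
        {Y. Y \<subseteq> primes_of A \<and> odd (card Y)}
    / prod (\<lambda>r. (real r - 1) * real r ^ (socle_rank A r - 1)) (primes_of A)"

text \<open>The set E(G,H,A). The value f(X) on an orbit X is f of any element of X.\<close>
definition calE :: "'g monoid \<Rightarrow> 'g set \<Rightarrow> 'a monoid \<Rightarrow> ('g \<Rightarrow> 'a \<Rightarrow> 'a) \<Rightarrow> ('a \<Rightarrow> int) set" where
  "calE G H A \<phi> = {f.
     (\<forall>h\<in>H. \<forall>a\<in>carrier A. f (\<phi> h a) = f a)
   \<and> (\<Sum>Orb\<in>orbits_set H \<phi> A. f (SOME x. x \<in> Orb)) = 1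
   \<and> (\<exists>c\<in>carrier A. \<forall>a\<in>carrier A. f a \<noteq> 0 \<longrightarrow> loc_conj G \<phi> A c a)
   \<and> (\<forall>L C. min_cocyclic A L \<and> C \<in> rcosets\<^bsub>A\<^esub> L \<longrightarrow>
          (\<Sum>c\<in>C. int (card (cent H \<phi> {c})) * f c) \<ge> 0)
   \<and> (\<forall>a\<in>carrier A. real_of_int (f a) \<ge>
          - hA A * (real (card (cent H \<phi> {pi_part A (pi0 A) a})) / real (card (cent H \<phi> {a}))))
   \<and> (\<exists>a\<in>carrier A. f a < 0)}"

end

theory Submission
  imports Defs
begin

lemma restrict_action:
  assumes "group_action G E \<phi>" "subgroup H G"
  shows "group_action (G\<lparr>carrier := H\<rparr>) E \<phi>"
proof -
  have gh: "group_hom G (BijGroup E) \<phi>" using assms(1) group_action_def by blast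
  have "group G" using gh group_hom_def by blast
  then have g1: "group (G\<lparr>carrier := H\<rparr>)" using assms(2) subgroup.subgroup_is_group by blast
  have g2: "group (BijGroup E)" using gh group_hom_def by blast
  have "\<phi> \<in> hom G (BijGroup E)" using gh group_hom_def group_hom_axioms_def by blast
  then have "\<phi> \<in> hom (G\<lparr>carrier := H\<rparr>) (BijGroup E)"
    using subgroup.subset[OF assms(2)] unfolding hom_def by auto
  then show ?thesis unfolding group_action_def group_hom_def group_hom_axioms_def
    using g1 g2 by blast
qed

lemma hA_bound:
  fixes A :: "'a monoid" and p :: nat
  assumes "Factorial_Ring.prime p" "primes_of A = {p}"
  shows "hA A \<ge> 0 \<and> hA A * (real p - 1) < 1"
proof -
  define m where "m = socle_rank A p - 1"
  have p2: "real p \<ge> 2" using assms(1) prime_ge_2_nat by (metis of_nat_numeral of_nat_le_iff)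
  have Ys: "{Y. Y \<subseteq> {p} \<and> odd (card Y)} = {{p}}"
    by (auto simp: subset_singleton_iff)
  have h: "hA A = (real p ^ m - 1) / ((real p - 1) * real p ^ m)"
    unfolding hA_def assms(2) Ys m_def by simp
  have pm: "real p ^ m \<ge> 1" using p2 by (simp add: one_le_power)
  have "hA A \<ge> 0" unfolding h using pm p2 by (intro divide_nonneg_pos) auto
  moreover have "hA A * (real p - 1) = (real p ^ m - 1) / real p ^ m"
    unfolding h using p2 by (simp add: field_simps)
  moreover have "(real p ^ m - 1) / real p ^ m < 1" using pm by (simp add: divide_less_eq)
  ultimately show ?thesis by simp
qed

theorem lemma5p1:
  fixes G :: "'g monoid" and A :: "'a monoid" and \<phi> :: "'g \<Rightarrow> 'a \<Rightarrow> 'a"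
    and H :: "'g set" and f :: "'a \<Rightarrow> int" and p :: nat and a :: 'a
  assumes "Factorial_Ring.prime p"
    and "comm_group A"
    and "A \<cong> integer_mod_group p \<times>\<times> integer_mod_group p"
    and "comm_group G" and "finite (carrier G)"
    and "group_action G (carrier A) \<phi>"
    and "\<forall>g\<in>carrier G. \<phi> g \<in> hom A A"
    and "subgroup H G"
    and "f \<in> calE G H A \<phi>"
    and "a \<in> carrier A" and "f a < 0"
  shows "cent (carrier G) \<phi> {a} = cent (carrier G) \<phi> (carrier A)"
proof (rule ccontr)
  assume ne: "cent (carrier G) \<phi> {a} \<noteq> cent (carrier G) \<phi> (carrier A)"
  have grpA: "group A" using assms(2) comm_group_def by blast
  have grpG: "group G" using assms(4) comm_group_def by blast
  have p0: "p \<noteq> 0" using assms(1) by auto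
  have p2: "p \<ge> 2" using assms(1) prime_ge_2_nat by blast
  have cardA: "card (carrier A) = p ^ 2"
    using iso_same_card[OF assms(3)] p0 by (simp add: carrier_integer_mod_group card_cartesian_product power2_eq_square)
  have finA: "finite (carrier A)" using cardA p0 card.infinite by fastforce
  have prA: "primes_of A = {p}"
  proof -
    have "\<And>r. Factorial_Ring.prime r \<Longrightarrow> r dvd p ^ 2 \<longleftrightarrow> r = p"
      using assms(1) by (metis prime_dvd_power primes_dvd_imp_eq dvd_power pos2 dvd_refl)
    then show ?thesis unfolding primes_of_def cardA using assms(1) by auto
  qed
  have hAb: "hA A \<ge> 0 \<and> hA A * (real p - 1) < 1" using hA_bound[OF assms(1) prA] .
  have HG: "H \<subseteq> carrier G" using assms(8) subgroup.subset by blast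
  have finH: "finite H" using HG assms(5) finite_subset by blast
  have hom: "\<And>g. g \<in> carrier G \<Longrightarrow> group_hom A A (\<phi> g)"
    using assms(7) grpA unfolding group_hom_def group_hom_axioms_def by blast
  have "cent (carrier G) \<phi> (carrier A) \<subseteq> cent (carrier G) \<phi> {a}"
    using assms(10) unfolding cent_def by auto
  then obtain g where g: "g \<in> carrier G" "\<phi> g a = a" and nfix: "\<exists>x\<in>carrier A. \<phi> g x \<noteq> x"
    using ne unfolding cent_def by auto
  define F where "F = {y \<in> carrier A. \<phi> g y = y}"
  have subF: "subgroup F A"
  proof (rule group.subgroupI[OF grpA])
    show "F \<subseteq> carrier A" unfolding F_def by auto
    show "F \<noteq> {}" using g(2) assms(10) unfolding F_def by auto
    show "inv\<^bsub>A\<^esub> x \<in> F" if "x \<in> F" for x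
      using that group_hom.hom_inv[OF hom[OF g(1)]] unfolding F_def by (auto simp: group.inv_closed[OF grpA])
    show "x \<otimes>\<^bsub>A\<^esub> y \<in> F" if "x \<in> F" "y \<in> F" for x y
      using that group_hom.hom_mult[OF hom[OF g(1)]] unfolding F_def by (auto simp: monoid.m_closed[OF group.is_monoid[OF grpA]])
  qed
  have oneF: "\<one>\<^bsub>A\<^esub> \<in> F" using subF subgroup.one_closed by blast
  have FA: "F \<subseteq> carrier A" unfolding F_def by auto
  have FneA: "F \<noteq> carrier A" using nfix unfolding F_def by auto
  have "card F dvd p ^ 2"
    using group.lagrange[OF grpA subF] cardA unfolding order_def by (metis dvd_triv_right)
  then obtain i where i: "i \<le> 2" "card F = p ^ i" using divides_primepow_nat[OF assms(1)] by blast
  have "card F < card (carrier A)" using FA FneA finA psubset_card_mono by blast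
  then have "i \<noteq> 2" using i cardA by auto
  then have "i = 0 \<or> i = 1" using i(1) by linarith
  then have cardF: "card F \<le> p" using i p2 by auto
  define Orb where "Orb = {\<phi> h a | h. h \<in> H}"
  have act: "group_action (G\<lparr>carrier := H\<rparr>) (carrier A) \<phi>" using restrict_action[OF assms(6,8)] .
  have orbO: "orbit (G\<lparr>carrier := H\<rparr>) \<phi> a = Orb" unfolding orbit_def Orb_def by simp
  have stabO: "stabilizer (G\<lparr>carrier := H\<rparr>) \<phi> a = cent H \<phi> {a}" unfolding stabilizer_def cent_def by auto
  have os: "card Orb * card (cent H \<phi> {a}) = card H"
    using group_action.orbit_stabilizer_theorem[OF act assms(10)] orbO stabO by (simp add: order_def)
  have cardO: "card Orb \<le> p - 1"
  proof (cases "a = \<one>\<^bsub>A\<^esub>")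
    case True
    have "\<one>\<^bsub>G\<^esub> \<in> H" using assms(8) subgroup.one_closed by blast
    moreover have "\<And>h. h \<in> H \<Longrightarrow> \<phi> h \<one>\<^bsub>A\<^esub> = \<one>\<^bsub>A\<^esub>"
      using group_hom.hom_one[OF hom] HG by blast
    ultimately have "Orb = {\<one>\<^bsub>A\<^esub>}" unfolding Orb_def True by (auto intro!: exI[of _ "\<one>\<^bsub>G\<^esub>"])
    then show ?thesis using p2 by simp
  next
    case False
    have "Orb \<subseteq> F - {\<one>\<^bsub>A\<^esub>}"
    proof
      fix y assume "y \<in> Orb"
      then obtain h where h: "h \<in> H" "y = \<phi> h a" unfolding Orb_def by blast
      have hG: "h \<in> carrier G" using h HG by blast
      have yA: "y \<in> carrier A" using group_action.element_image[OF assms(6) hG assms(10)] h by blast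
      have "\<phi> g y = \<phi> (g \<otimes>\<^bsub>G\<^esub> h) a"
        using group_action.composition_rule[OF assms(6) assms(10) g(1) hG] h by simp
      also have "\<dots> = \<phi> (h \<otimes>\<^bsub>G\<^esub> g) a" using comm_monoid.m_comm[OF comm_group.axioms(1)[OF assms(4)] g(1) hG] by simp
      also have "\<dots> = y" using group_action.composition_rule[OF assms(6) assms(10) hG g(1)] h g by simp
      finally have "y \<in> F" unfolding F_def using yA by simp
      moreover have "y \<noteq> \<one>\<^bsub>A\<^esub>"
      proof
        assume "y = \<one>\<^bsub>A\<^esub>"
        then have "\<phi> h a = \<phi> h \<one>\<^bsub>A\<^esub>" using h group_hom.hom_one[OF hom[OF hG]] by simp
        then show False using group_action.inj_prop[OF assms(6) hG] assms(10) False
          monoid.one_closed[OF group.is_monoid[OF grpA]] by (meson inj_on_def)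
      qed
      ultimately show "y \<in> F - {\<one>\<^bsub>A\<^esub>}" by simp
    qed
    then have "card Orb \<le> card (F - {\<one>\<^bsub>A\<^esub>})" using finA FA by (meson card_mono finite_Diff finite_subset)
    also have "\<dots> = card F - 1" using oneF by simp
    finally show ?thesis using cardF by simp
  qed
  define b where "b = pi_part A (pi0 A) a"
  have IV: "real_of_int (f a) \<ge> - hA A * (real (card (cent H \<phi> {b})) / real (card (cent H \<phi> {a})))"
    using assms(9,10) unfolding calE_def b_def by blast
  have cb: "card (cent H \<phi> {b}) \<le> card H" using finH unfolding cent_def by (intro card_mono) auto
  have ca: "card (cent H \<phi> {a}) > 0"
  proof -
    have o1: "\<one>\<^bsub>G\<^esub> \<in> H" using assms(8) subgroup.one_closed by blast
    have "(\<lambda>x\<in>carrier A. x) a = \<phi> \<one>\<^bsub>G\<^esub> a" using group_action.id_eq_one[OF assms(6)] by simp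
    then have "\<phi> \<one>\<^bsub>G\<^esub> a = a" using assms(10) by simp
    then have "\<one>\<^bsub>G\<^esub> \<in> cent H \<phi> {a}" using o1 unfolding cent_def by simp
    moreover have "finite (cent H \<phi> {a})" using finH unfolding cent_def by simp
    ultimately show ?thesis by (metis card_gt_0_iff empty_iff)
  qed
  have "real (card (cent H \<phi> {b})) / real (card (cent H \<phi> {a})) \<le> real (card H) / real (card (cent H \<phi> {a}))"
    using cb ca by (simp add: divide_right_mono)
  also have "\<dots> = real (card Orb)" 
  proof -
    have "real (card H) = real (card Orb) * real (card (cent H \<phi> {a}))"
      using os by (metis of_nat_mult)
    then show ?thesis using ca by simp
  qed
  also have "\<dots> \<le> real p - 1" using cardO p2 by (simp add: of_nat_diff)
  finally have r: "real (card (cent H \<phi> {b})) / real (card (cent H \<phi> {a})) \<le> real p - 1" .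
  have "hA A * (real (card (cent H \<phi> {b})) / real (card (cent H \<phi> {a}))) \<le> hA A * (real p - 1)"
    using r hAb by (intro mult_left_mono) auto
  then have "real_of_int (f a) > -1" using IV hAb by linarith
  then show False using assms(11) by linarith
qed

end
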